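(* For every constant $c\in\mathbb C$, the polynomial $z^m+\bar z^m$ is quasiharmonic, i.e. $F(z^m+\bar z^m)=0$. The polynomials $z\bar z$ and $z^m+\bar z^m$ are algebraically independent.
   Context: Let $m\ge2$, $\zeta=e^{2\pi i/m}$, and let $z,\bar z$ be independent variables. For $j=0,\dots,m-1$ let $s_j$ be the algebra automorphism of $\mathbb C[z,\bar z]$ with $s_j(z)=-\zeta^j\bar z$, $s_j(\bar z)=-\zeta^{-j}z$. For constant $c$ define Dunkl operators $Y(q)=\frac{\partial q}{\partial z}-c\sum_j\frac{q-s_j(q)}{z+\zeta^j\bar z}$, $\bar Y(q)=\frac{\partial q}{\partial\bar z}-c\sum_j\frac{q-s_j(q)}{\bar z+\zeta^{-j}z}$, and $F=-Y\bar Y$. *)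

theory Defs
  imports Complex_Main "HOL-Computational_Algebra.Polynomial"
begin

text \<open>Polynomials in the two independent variables z, zbar over the complex numbers are
represented as complex poly poly: a polynomial in z (outer variable) whose coefficients
are polynomials in zbar (inner variable).\<close>

type_synonym bipoly = "complex poly poly"

definition Zv :: bipoly where "Zv = [:0, 1:]"
definition Zbv :: bipoly where "Zbv = [:[:0, 1:]:]"
definition cst2 :: "complex \<Rightarrow> bipoly" where "cst2 a = [:[:a:]:]"

text \<open>Substitution z := A, zbar := B (the algebra homomorphism determined by these values).\<close>
definition subst2 :: "bipoly \<Rightarrow> bipoly \<Rightarrow> bipoly \<Rightarrow> bipoly" where
  "subst2 q A B = poly (map_poly (\<lambda>c. poly (map_poly cst2 c) B) q) A"

definition dz :: "bipoly \<Rightarrow> bipoly" where "dz q = pderiv q"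
definition dzb :: "bipoly \<Rightarrow> bipoly" where "dzb q = map_poly pderiv q"

definition zeta :: "nat \<Rightarrow> complex" where "zeta m = cis (2 * pi / real m)"

definition sref :: "nat \<Rightarrow> nat \<Rightarrow> bipoly \<Rightarrow> bipoly" where
  "sref m j q = subst2 q (- cst2 (zeta m ^ j) * Zbv) (- cst2 (inverse (zeta m ^ j)) * Zv)"

text \<open>Dunkl operators (the quotients are exact polynomial divisions).\<close>
definition DunklY :: "nat \<Rightarrow> complex \<Rightarrow> bipoly \<Rightarrow> bipoly" where
  "DunklY m c q = dz q - cst2 c *
     (\<Sum>j<m. (q - sref m j q) div (Zv + cst2 (zeta m ^ j) * Zbv))"

definition DunklYb :: "nat \<Rightarrow> complex \<Rightarrow> bipoly \<Rightarrow> bipoly" where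
  "DunklYb m c q = dzb q - cst2 c *
     (\<Sum>j<m. (q - sref m j q) div (Zbv + cst2 (inverse (zeta m ^ j)) * Zv))"

definition DunklF :: "nat \<Rightarrow> complex \<Rightarrow> bipoly \<Rightarrow> bipoly" where
  "DunklF m c q = - DunklY m c (DunklYb m c q)"

definition alg_indep2 :: "bipoly \<Rightarrow> bipoly \<Rightarrow> bool" where
  "alg_indep2 p q \<longleftrightarrow> (\<forall>P :: bipoly. subst2 P p q = 0 \<longrightarrow> P = 0)"

end

theory Submission
  imports Defs
begin

definition ev :: "bipoly \<Rightarrow> complex \<Rightarrow> complex \<Rightarrow> complex" where
  "ev q x y = poly (poly q [:x:]) y"

lemma ev_alt: "poly (map_poly (\<lambda>c. poly c y) P) x = ev P x y"
  unfolding ev_def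
  by (induction P rule: pCons_induct) (auto simp: map_poly_pCons)

lemma ev_simps [simp]:
  "ev (p + q) x y = ev p x y + ev q x y"
  "ev (p - q) x y = ev p x y - ev q x y"
  "ev (p * q) x y = ev p x y * ev q x y"
  "ev (- p) x y = - ev p x y"
  "ev (p ^ n) x y = ev p x y ^ n"
  "ev (sum f A) x y = (\<Sum>a\<in>A. ev (f a) x y)"
  "ev 0 x y = 0" "ev 1 x y = 1"
  "ev Zv x y = x" "ev Zbv x y = y" "ev (cst2 c) x y = c"
  by (simp_all add: ev_def poly_sum Zv_def Zbv_def cst2_def)

lemma ev_inj:
  assumes "\<And>x y. ev P x y = ev Q x y"
  shows "P = Q"
proof -
  let ?R = "P - Q"
  have "\<And>x y. poly (map_poly (\<lambda>c. poly c y) ?R) x = 0" using assms by (simp add: ev_alt)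
  hence "\<And>y. map_poly (\<lambda>c. poly c y) ?R = 0" by (simp add: poly_all_0_iff_0[symmetric])
  hence "\<And>y i. poly (coeff ?R i) y = 0"
    by (metis coeff_0 coeff_map_poly poly_0)
  hence "\<And>i. coeff ?R i = 0" by (simp add: poly_all_0_iff_0[symmetric])
  hence "?R = 0" by (simp add: poly_eq_iff)
  thus ?thesis by simp
qed

lemma ev_polyQ: "ev (poly Q A) x y = poly (map_poly (\<lambda>q. ev q x y) Q) (ev A x y)"
  by (induction Q rule: pCons_induct) (auto simp: map_poly_pCons)

lemma cst2_0 [simp]: "cst2 0 = 0" by (simp add: cst2_def)

lemma ev_cst_poly: "ev (poly (map_poly cst2 c) B) x y = poly c (ev B x y)"
  by (induction c rule: pCons_induct) (auto simp: map_poly_pCons)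

lemma ev_subst2: "ev (subst2 P A B) x y = ev P (ev A x y) (ev B x y)"
proof -
  have "ev (subst2 P A B) x y = poly (map_poly (\<lambda>q. ev q x y) (map_poly (\<lambda>c. poly (map_poly cst2 c) B) P)) (ev A x y)"
    by (simp add: subst2_def ev_polyQ)
  also have "\<dots> = poly (map_poly (\<lambda>c. poly c (ev B x y)) P) (ev A x y)"
    by (subst map_poly_map_poly) (simp_all add: o_def ev_cst_poly poly_0)
  finally show ?thesis by (simp add: ev_alt)
qed

lemma zeta_pow_m: "m > 0 \<Longrightarrow> zeta m ^ m = 1"
  by (simp add: zeta_def DeMoivre)

lemma zeta_pow_ne1:
  assumes "0 < e" "e < m" shows "zeta m ^ e \<noteq> 1"
proof
  assume "zeta m ^ e = 1"
  hence "cis (real e * (2 * pi / real m)) = 1" by (simp add: zeta_def DeMoivre)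
  hence "cos (real e * (2 * pi / real m)) = 1" by (metis cis.sel(1) one_complex.sel(1))
  then obtain n :: int where n: "real e * (2 * pi / real m) = n * 2 * pi" by (auto simp: cos_one_2pi_int)
  hence "(real e / real m) * (2 * pi) = real_of_int n * (2 * pi)" by (simp add: field_simps)
  moreover have "2 * pi \<noteq> 0" by simp
  ultimately have "real e / real m = n" by (metis mult_cancel_right)
  moreover have "0 < real e / real m" "real e / real m < 1" using assms by auto
  ultimately show False by auto
qed

lemma rootsum:
  assumes "e < m"
  shows "(\<Sum>j<m. inverse (zeta m ^ j) ^ e) = (if e = 0 then of_nat m else 0)"
proof (cases "e = 0")
  case True thus ?thesis by simp
next
  case False
  define z where "z = inverse (zeta m ^ e)"
  have eq: "inverse (zeta m ^ j) ^ e = z ^ j" for j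
    by (simp add: z_def power_inverse flip: power_mult) (simp add: mult.commute)
  have "(zeta m ^ e) ^ m = (zeta m ^ m) ^ e" by (simp flip: power_mult add: mult.commute)
  also have "\<dots> = 1" using assms zeta_pow_m[of m] by simp
  finally have "z ^ m = 1" by (simp add: z_def power_inverse)
  moreover have "z \<noteq> 1" using zeta_pow_ne1[of e m] False assms by (auto simp: z_def)
  ultimately have "(\<Sum>j<m. z ^ j) = 0" by (simp add: geometric_sum)
  thus ?thesis using False by (simp add: eq)
qed

lemma ex_root: "m \<ge> 1 \<Longrightarrow> \<exists>a::complex. a ^ m = t"
proof (cases "t = 0")
  case True
  assume "m \<ge> 1" thus ?thesis using True by (intro exI[of _ 0]) simp
next
  case False
  assume m: "m \<ge> 1"
  have "rcis (root m (cmod t)) (Arg t / real m) ^ m = rcis (root m (cmod t) ^ m) (real m * (Arg t / real m))"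
    by (rule DeMoivre2)
  also have "\<dots> = rcis (cmod t) (Arg t)" using m by (simp add: real_root_pow_pos2)
  also have "\<dots> = t" by (rule rcis_cmod_Arg)
  finally show ?thesis by blast
qed

lemma surj2:
  assumes "m \<ge> 1" shows "\<exists>a b::complex. a * b = u \<and> a ^ m + b ^ m = v"
proof (cases "u = 0")
  case True
  obtain a where "a ^ m = v" using ex_root[OF assms] by blast
  thus ?thesis using True assms by (intro exI[of _ a] exI[of _ 0]) auto
next
  case False
  define t where "t = (v + csqrt (v^2 - 4 * u^m)) / 2"
  have sq: "csqrt (v^2 - 4 * u^m) ^ 2 = v^2 - 4 * u^m" by simp
  have teq: "t * (v - t) = u ^ m" unfolding t_def using sq by (simp add: field_simps power2_eq_square)
  have "t \<noteq> 0" using teq False by auto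
  obtain a where a: "a ^ m = t" using ex_root[OF assms] by blast
  have a0: "a \<noteq> 0" using a \<open>t \<noteq> 0\<close> assms by auto
  have "(u / a) ^ m = v - t" using teq a \<open>t \<noteq> 0\<close> by (simp add: power_divide field_simps)
  thus ?thesis using a a0 by (intro exI[of _ a] exI[of _ "u / a"]) auto
qed

lemma indep:
  assumes "m \<ge> 1" shows "alg_indep2 (Zv * Zbv) (Zv ^ m + Zbv ^ m)"
  unfolding alg_indep2_def
proof (intro allI impI)
  fix P assume h: "subst2 P (Zv * Zbv) (Zv ^ m + Zbv ^ m) = 0"
  have "ev P u v = ev 0 u v" for u v
  proof -
    obtain a b where ab: "a * b = u" "a ^ m + b ^ m = v" using surj2[OF assms] by blast
    have "ev (subst2 P (Zv * Zbv) (Zv ^ m + Zbv ^ m)) a b = 0" using h by simp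
    thus ?thesis using ab by (simp add: ev_subst2)
  qed
  thus "P = 0" by (rule ev_inj)
qed

lemma key1:
  fixes w x y :: complex
  assumes w: "w ^ m = 1" and m: "m \<ge> 1"
  shows "x^m + y^m - ((-w*y)^m + (-inverse w*x)^m)
       = ((1 - (-1)^m) * (\<Sum>k<m. y^k * (-inverse w*x)^(m-1-k))) * (y + inverse w * x)"
proof -
  define s :: complex where "s = (-1)^m"
  have ss: "s * s = 1" by (simp add: s_def flip: power_add)
  have "(-w*y)^m = ((-1)*w*y)^m" by simp
  also have "\<dots> = s * y^m" using w by (simp only: power_mult_distrib s_def) simp
  finally have a: "(-w*y)^m = s * y^m" .
  have "(-inverse w*x)^m = ((-1)*inverse w*x)^m" by simp
  also have "\<dots> = s * x^m" using w by (simp only: power_mult_distrib s_def power_inverse) simp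
  finally have b: "(-inverse w*x)^m = s * x^m" .
  have tel: "y^m - (-inverse w*x)^m = (y - (-inverse w*x)) * (\<Sum>k<m. y^k * (-inverse w*x)^(m-1-k))"
    using diff_power_eq_sum[of y "m-1" "-inverse w*x"] m by simp
  have "((1 - (-1)^m) * (\<Sum>k<m. y^k * (-inverse w*x)^(m-1-k))) * (y + inverse w * x)
      = (1 - s) * (y^m - (-inverse w*x)^m)" using tel by (simp add: s_def algebra_simps)
  also have "\<dots> = (1 - s) * (y^m - s * x^m)" using b by simp
  also have "\<dots> = y^m - s*x^m - s*y^m + (s*s)*x^m" by (simp add: algebra_simps)
  also have "\<dots> = x^m + y^m - (s * y^m + s * x^m)" using ss by simp
  finally show ?thesis using a b by simp
qed

lemma key2:
  fixes w x y K :: complex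
  assumes w: "w \<noteq> 0" and n: "n \<ge> 1"
  shows "K * (y^n - (-inverse w*x)^n)
       = (K * inverse w * (\<Sum>k<n. y^k * (-inverse w*x)^(n-1-k))) * (x + w * y)"
proof -
  have tel: "y^n - (-inverse w*x)^n = (y - (-inverse w*x)) * (\<Sum>k<n. y^k * (-inverse w*x)^(n-1-k))"
    using diff_power_eq_sum[of y "n-1" "-inverse w*x"] n by simp
  have e: "y - (-inverse w*x) = inverse w * (x + w * y)" using w by (simp add: field_simps)
  show ?thesis by (subst tel, subst e) (simp add: mult_ac)
qed

lemma neg_mult_pow: "(- (a * b :: complex))^n = (-a)^n * b^n"
  by (metis minus_mult_left power_mult_distrib)

lemma sum1:
  assumes m: "m \<ge> 1"
  shows "(\<Sum>j<m. \<Sum>k<m. y^k * (-inverse (zeta m ^ j) * x)^(m-1-k)) = of_nat m * (y::complex)^(m-1)"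
proof -
  have "(\<Sum>j<m. \<Sum>k<m. y^k * (-inverse (zeta m ^ j) * x)^(m-1-k))
      = (\<Sum>k<m. y^k * (-x)^(m-1-k) * (\<Sum>j<m. inverse (zeta m ^ j)^(m-1-k)))"
    by (subst sum.swap) (simp add: sum_distrib_left neg_mult_pow mult_ac)
  also have "\<dots> = (\<Sum>k<m. if k = m - 1 then y^k * (-x)^(m-1-k) * of_nat m else 0)"
    by (rule sum.cong) (auto simp: rootsum)
  also have "\<dots> = of_nat m * y^(m-1)" using m by simp
  finally show ?thesis .
qed

lemma sum2:
  assumes m: "m \<ge> 2"
  shows "(\<Sum>j<m. inverse (zeta m ^ j) * (\<Sum>k<m-1. y^k * (-inverse (zeta m ^ j) * x)^(m-1-1-k))) = (0::complex)"
proof -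
  have "(\<Sum>j<m. inverse (zeta m ^ j) * (\<Sum>k<m-1. y^k * (-inverse (zeta m ^ j) * x)^(m-1-1-k)))
      = (\<Sum>k<m-1. y^k * (-x)^(m-2-k) * (\<Sum>j<m. inverse (zeta m ^ j)^(m-1-k)))"
  proof -
    have pt: "inverse (zeta m ^ j) * (y^k * (-inverse (zeta m ^ j) * x)^(m-1-1-k)) =
          y^k * (-x)^(m-2-k) * inverse (zeta m ^ j)^(m-1-k)" if "k < m - 1" for j k
    proof -
      have "m - 1 - k = Suc (m-2-k)" using that by simp
      thus ?thesis by (simp add: neg_mult_pow mult_ac)
    qed
    have "(\<Sum>j<m. inverse (zeta m ^ j) * (\<Sum>k<m-1. y^k * (-inverse (zeta m ^ j) * x)^(m-1-1-k)))
       = (\<Sum>j<m. \<Sum>k<m-1. inverse (zeta m ^ j) * (y^k * (-inverse (zeta m ^ j) * x)^(m-1-1-k)))"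
      by (simp only: sum_distrib_left)
    also have "\<dots> = (\<Sum>j<m. \<Sum>k<m-1. y^k * (-x)^(m-2-k) * inverse (zeta m ^ j)^(m-1-k))"
      by (intro sum.cong refl pt) simp
    also have "\<dots> = (\<Sum>k<m-1. \<Sum>j<m. y^k * (-x)^(m-2-k) * inverse (zeta m ^ j)^(m-1-k))"
      by (rule sum.swap)
    finally show ?thesis by (simp add: sum_distrib_left)
  qed
  also have "\<dots> = 0" by (rule sum.neutral) (auto simp: rootsum)
  finally show ?thesis .
qed

lemma ev_sref: "ev (sref m j q) x y = ev q (- (zeta m ^ j) * y) (- inverse (zeta m ^ j) * x)"
  by (simp add: sref_def ev_subst2)

lemma div_ev:
  assumes "b \<noteq> 0" "\<And>x y. ev a x y = ev Q x y * ev b x y"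
  shows "a div b = Q"
proof -
  have "a = Q * b" using assms(2) by (intro ev_inj) simp
  thus ?thesis using assms(1) by simp
qed

lemma map_pderiv_add: "map_poly pderiv (A + B) = map_poly pderiv A + map_poly pderiv (B :: bipoly)"
  by (rule poly_eqI) (simp add: coeff_map_poly pderiv_add)

lemma dzb_q: "dzb (Zv^m + Zbv^m) = cst2 (of_nat m) * Zbv^(m-1)"
proof -
  have "Zv^m = monom 1 m" by (simp add: Zv_def monom_altdef)
  hence 1: "map_poly pderiv (Zv^m) = 0" by (simp add: map_poly_monom)
  have 2: "map_poly pderiv (Zbv^m) = [:pderiv ([:0,1:]^m):]"
    by (simp add: Zbv_def poly_const_pow map_poly_pCons)
  have "dzb (Zv^m + Zbv^m) = [:pderiv ([:0,1:]^m):]"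
    by (simp only: dzb_def map_pderiv_add 1 2) simp
  also have "\<dots> = cst2 (of_nat m) * Zbv^(m-1)"
    by (simp add: pderiv_power pderiv_pCons cst2_def Zbv_def poly_const_pow)
  finally show ?thesis .
qed

lemma dz_p: "dz (cst2 K * Zbv^n) = 0"
  by (simp add: dz_def cst2_def Zbv_def poly_const_pow pderiv_pCons)

lemma zeta_ne0: "zeta m ^ j \<noteq> 0"
  by (simp add: zeta_def)

theorem corollary2p5:
  fixes m :: nat
  assumes "m \<ge> 2"
  shows "(\<forall>c :: complex. DunklF m c (Zv ^ m + Zbv ^ m) = 0)
         \<and> alg_indep2 (Zv * Zbv) (Zv ^ m + Zbv ^ m)"
proof
  show "alg_indep2 (Zv * Zbv) (Zv ^ m + Zbv ^ m)" using assms by (intro indep) simp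
  show "\<forall>c :: complex. DunklF m c (Zv ^ m + Zbv ^ m) = 0"
  proof
    fix c :: complex
    define q where "q = Zv ^ m + Zbv ^ m"
    have m1: "m \<ge> 1" using assms by simp
    have wm: "(zeta m ^ j) ^ m = 1" for j
    proof -
      have "(zeta m ^ j) ^ m = (zeta m ^ m) ^ j" by (simp flip: power_mult add: mult.commute)
      thus ?thesis using zeta_pow_m[of m] m1 by simp
    qed
    define Q where "Q j = cst2 (1 - (-1)^m) * (\<Sum>k<m. Zbv^k * (- cst2 (inverse (zeta m ^ j)) * Zv)^(m-1-k))" for j
    have hQ: "(q - sref m j q) div (Zbv + cst2 (inverse (zeta m ^ j)) * Zv) = Q j" for j
    proof (rule div_ev)
      show "Zbv + cst2 (inverse (zeta m ^ j)) * Zv \<noteq> 0"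
      proof
        assume "Zbv + cst2 (inverse (zeta m ^ j)) * Zv = 0"
        hence "ev (Zbv + cst2 (inverse (zeta m ^ j)) * Zv) 0 1 = ev 0 0 1" by simp
        thus False by simp
      qed
      fix x y
      show "ev (q - sref m j q) x y = ev (Q j) x y * ev (Zbv + cst2 (inverse (zeta m ^ j)) * Zv) x y"
        unfolding Q_def q_def by (simp only: ev_simps ev_sref) (rule key1[OF wm m1])
    qed
    have sumQ: "(\<Sum>j<m. Q j) = cst2 ((1 - (-1)^m) * of_nat m) * Zbv^(m-1)"
    proof (rule ev_inj)
      fix x y
      have "ev (\<Sum>j<m. Q j) x y = (1 - (-1)^m) * (\<Sum>j<m. \<Sum>k<m. y^k * (-inverse (zeta m ^ j) * x)^(m-1-k))"
        unfolding Q_def by (simp add: sum_distrib_left)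
      also have "\<dots> = (1 - (-1)^m) * (of_nat m * y^(m-1))" by (simp only: sum1[OF m1])
      finally show "ev (\<Sum>j<m. Q j) x y = ev (cst2 ((1 - (-1)^m) * of_nat m) * Zbv^(m-1)) x y"
        by simp
    qed
    define K where "K = of_nat m - c * ((1 - (-1)^m) * of_nat m)"
    have YB: "DunklYb m c q = cst2 K * Zbv^(m-1)"
    proof -
      have "DunklYb m c q = dzb q - cst2 c * (\<Sum>j<m. Q j)"
        unfolding DunklYb_def by (simp add: hQ)
      also have "\<dots> = cst2 K * Zbv^(m-1)"
        unfolding sumQ q_def dzb_q K_def by (rule ev_inj) (simp add: algebra_simps)
      finally show ?thesis .
    qed
    define p where "p = cst2 K * Zbv^(m-1)"
    define R where "R j = cst2 (K * inverse (zeta m ^ j)) * (\<Sum>k<m-1. Zbv^k * (- cst2 (inverse (zeta m ^ j)) * Zv)^(m-1-1-k))" for j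
    have hR: "(p - sref m j p) div (Zv + cst2 (zeta m ^ j) * Zbv) = R j" for j
    proof (rule div_ev)
      show "Zv + cst2 (zeta m ^ j) * Zbv \<noteq> 0"
      proof
        assume "Zv + cst2 (zeta m ^ j) * Zbv = 0"
        hence "ev (Zv + cst2 (zeta m ^ j) * Zbv) 1 0 = ev 0 1 0" by simp
        thus False by simp
      qed
      fix x y
      have "m - 1 \<ge> 1" using assms by simp
      show "ev (p - sref m j p) x y = ev (R j) x y * ev (Zv + cst2 (zeta m ^ j) * Zbv) x y"
        unfolding R_def p_def
        using key2[OF zeta_ne0 \<open>m - 1 \<ge> 1\<close>, where K=K and y=y and x=x]
        by (simp only: ev_simps ev_sref right_diff_distrib)
    qed
    have sumR: "(\<Sum>j<m. R j) = 0"
    proof (rule ev_inj)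
      fix x y
      have "ev (\<Sum>j<m. R j) x y = K * (\<Sum>j<m. inverse (zeta m ^ j) * (\<Sum>k<m-1. y^k * (-inverse (zeta m ^ j) * x)^(m-1-1-k)))"
        unfolding R_def by (simp add: sum_distrib_left mult.assoc)
      also have "\<dots> = 0" by (simp only: sum2[OF assms]) simp
      finally show "ev (\<Sum>j<m. R j) x y = ev 0 x y" by simp
    qed
    have "DunklY m c p = 0"
    proof -
      have dp: "dz p = 0" by (simp add: p_def dz_p)
      show ?thesis unfolding DunklY_def by (simp add: hR sumR dp)
    qed
    thus "DunklF m c (Zv ^ m + Zbv ^ m) = 0"
      unfolding DunklF_def using YB by (simp add: q_def p_def)
  qed
qed

end
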